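(* For any incentive-compatible selection mechanism $\mathcal{M}$ on directed forests, $Q(\mathcal{M})\le 4/5$.
   Context: Let $N$ be a finite set of $n$ vertices. A directed forest on $N$ is a directed acyclic graph on $N$ with every out-degree at most $1$; $\mathcal{F}^N$ is the set of such forests. $P(x;F)$ is the progeny of $x$ (number of vertices with a directed path to $x$, including $x$), $P^*(F)=\max_xP(x;F)$. A selection mechanism is a family (one for each $n$) of functions $\mathcal{M}:N\times\mathcal{F}^N\to[0,1]$ with $\sum_x\mathcal{M}(x;F)\le1$. It is incentive-compatible if $\mathcal{M}(x;F)=\mathcal{M}(x;F')$ whenever $F,F'$ differ only in the out-edge of $x$. Quality: $Q(\mathcal{M};F)=\sum_x\mathcal{M}(x;F)P(x;F)/P^*(F)$ and $Q(\mathcal{M})=\lim_{|N|\to\infty}\min_{F\in\mathcal{F}^N}Q(\mathcal{M};F)$. *)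

theory Defs
  imports Complex_Main
begin

definition vset :: "nat \<Rightarrow> nat set" where
  "vset n = {0..<n}"

definition is_forest :: "nat \<Rightarrow> (nat \<times> nat) set \<Rightarrow> bool" where
  "is_forest n F \<longleftrightarrow> F \<subseteq> vset n \<times> vset n \<and> acyclic F \<and>
     (\<forall>x \<in> vset n. card {y. (x, y) \<in> F} \<le> 1)"

definition forests :: "nat \<Rightarrow> (nat \<times> nat) set set" where
  "forests n = {F. is_forest n F}"

definition progeny :: "nat \<Rightarrow> nat \<Rightarrow> (nat \<times> nat) set \<Rightarrow> nat" where
  "progeny n x F = card {y \<in> vset n. (y, x) \<in> F\<^sup>*}"

definition max_progeny :: "nat \<Rightarrow> (nat \<times> nat) set \<Rightarrow> nat" where
  "max_progeny n F = Max ((\<lambda>x. progeny n x F) ` vset n)"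

definition selection_mechanism :: "(nat \<Rightarrow> nat \<Rightarrow> (nat \<times> nat) set \<Rightarrow> real) \<Rightarrow> bool" where
  "selection_mechanism M \<longleftrightarrow> (\<forall>n. \<forall>F \<in> forests n.
     (\<forall>x \<in> vset n. 0 \<le> M n x F \<and> M n x F \<le> 1) \<and> (\<Sum>x \<in> vset n. M n x F) \<le> 1)"

definition incentive_compatible :: "(nat \<Rightarrow> nat \<Rightarrow> (nat \<times> nat) set \<Rightarrow> real) \<Rightarrow> bool" where
  "incentive_compatible M \<longleftrightarrow> (\<forall>n. \<forall>F \<in> forests n. \<forall>F' \<in> forests n. \<forall>x \<in> vset n.
     {e \<in> F. fst e \<noteq> x} = {e \<in> F'. fst e \<noteq> x} \<longrightarrow> M n x F = M n x F')"

definition quality :: "(nat \<Rightarrow> nat \<Rightarrow> (nat \<times> nat) set \<Rightarrow> real) \<Rightarrow> nat \<Rightarrow> (nat \<times> nat) set \<Rightarrow> real" where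
  "quality M n F = (\<Sum>x \<in> vset n. M n x F * real (progeny n x F)) / real (max_progeny n F)"

definition min_quality :: "(nat \<Rightarrow> nat \<Rightarrow> (nat \<times> nat) set \<Rightarrow> real) \<Rightarrow> nat \<Rightarrow> real" where
  "min_quality M n = Min ((\<lambda>F. quality M n F) ` forests n)"

end

theory Submission
  imports Defs
begin

lemma ac0: "acyclic ({}::(nat \<times> nat) set)" by (simp add: acyclic_def)

definition F1 :: "(nat \<times> nat) set" where "F1 = {(1,0)}"
definition F2 :: "(nat \<times> nat) set" where "F2 = {(1,0),(0,2)}"

lemma F1_rt: "(y,x) \<in> F1\<^sup>* \<longleftrightarrow> y = x \<or> (y = 1 \<and> x = 0)"
  unfolding F1_def by (auto simp: rtrancl_insert)

lemma F2_rt: "(y,x) \<in> F2\<^sup>* \<longleftrightarrow> y = x \<or> (y = 1 \<and> x = 0) \<or> (y = 0 \<and> x = 2) \<or> (y = 1 \<and> x = 2)"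
  unfolding F2_def by (auto simp: rtrancl_insert)

lemma forest1: "n \<ge> 3 \<Longrightarrow> F1 \<in> forests n"
proof -
  assume n: "n \<ge> 3"
  have a: "acyclic F1" unfolding F1_def by (simp add: acyclic_insert ac0)
  have c: "card {y. (x, y) \<in> F1} \<le> 1" for x
  proof (cases "x = 1")
    case True then have "{y. (x, y) \<in> F1} = {0}" unfolding F1_def by auto
    then show ?thesis by simp
  next
    case False then have "{y. (x, y) \<in> F1} = {}" unfolding F1_def by auto
    then show ?thesis by simp
  qed
  show ?thesis using n a c unfolding forests_def is_forest_def vset_def F1_def by auto
qed

lemma forest2: "n \<ge> 3 \<Longrightarrow> F2 \<in> forests n"
proof -
  assume n: "n \<ge> 3"
  have a: "acyclic F2" unfolding F2_def by (auto simp add: acyclic_insert rtrancl_insert ac0)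
  have c: "card {y. (x, y) \<in> F2} \<le> 1" for x
  proof -
    consider "x = 1" | "x = 0" | "x \<noteq> 0 \<and> x \<noteq> 1" by blast
    then show ?thesis
    proof cases
      case 1 then have "{y. (x, y) \<in> F2} = {0}" unfolding F2_def by auto
      then show ?thesis by simp
    next
      case 2 then have "{y. (x, y) \<in> F2} = {2}" unfolding F2_def by auto
      then show ?thesis by simp
    next
      case 3 then have "{y. (x, y) \<in> F2} = {}" unfolding F2_def by auto
      then show ?thesis by simp
    qed
  qed
  show ?thesis using n a c unfolding forests_def is_forest_def vset_def F2_def by auto
qed

lemma prog1: "n \<ge> 3 \<Longrightarrow> x \<in> vset n \<Longrightarrow> progeny n x F1 = (if x = 0 then 2 else 1)"
proof -
  assume n: "n \<ge> 3" and x: "x \<in> vset n"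
  show ?thesis
  proof (cases "x = 0")
    case True
    then have "{y \<in> vset n. (y, x) \<in> F1\<^sup>*} = {0,1}" using n by (auto simp: F1_rt vset_def)
    then show ?thesis using True by (simp add: progeny_def)
  next
    case False
    then have "{y \<in> vset n. (y, x) \<in> F1\<^sup>*} = {x}" using x by (auto simp: F1_rt vset_def)
    then show ?thesis using False by (simp add: progeny_def)
  qed
qed

lemma prog2a: "n \<ge> 3 \<Longrightarrow> progeny n 0 F2 = 2"
proof -
  assume n: "n \<ge> 3"
  have "{y \<in> vset n. (y, 0) \<in> F2\<^sup>*} = {0,1}" using n by (auto simp: F2_rt vset_def)
  then show ?thesis by (simp add: progeny_def)
qed

lemma prog2c: "n \<ge> 3 \<Longrightarrow> progeny n 2 F2 = 3"
proof -
  assume n: "n \<ge> 3"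
  have "{y \<in> vset n. (y, 2) \<in> F2\<^sup>*} = {0,1,2}" using n by (auto simp: F2_rt vset_def)
  then show ?thesis by (simp add: progeny_def)
qed

lemma prog2: "n \<ge> 3 \<Longrightarrow> x \<in> vset n \<Longrightarrow> progeny n x F2 \<le> 3"
proof -
  assume n: "n \<ge> 3" and x: "x \<in> vset n"
  have "{y \<in> vset n. (y, x) \<in> F2\<^sup>*} \<subseteq> {0,1,x}" by (auto simp: F2_rt)
  then have "card {y \<in> vset n. (y, x) \<in> F2\<^sup>*} \<le> card {0,1,x}" by (intro card_mono) auto
  also have "\<dots> \<le> 3" by (simp add: card_insert_if)
  finally show ?thesis by (simp add: progeny_def)
qed

lemma finite_forests: "finite (forests n)"
proof -
  have "forests n \<subseteq> Pow (vset n \<times> vset n)" unfolding forests_def is_forest_def by auto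
  then show ?thesis by (rule finite_subset) (simp add: vset_def)
qed

lemma maxp_ge: "x \<in> vset n \<Longrightarrow> progeny n x F \<le> max_progeny n F"
  unfolding max_progeny_def by (rule Max_ge) (auto simp: vset_def)

lemma key:
  assumes SM: "selection_mechanism M" and IC: "incentive_compatible M" and n: "n \<ge> 3"
  shows "min_quality M n \<le> 4/5"
proof -
  have f1: "F1 \<in> forests n" and f2: "F2 \<in> forests n" using n forest1 forest2 by auto
  have v0: "0 \<in> vset n" and v2: "2 \<in> vset n" using n by (auto simp: vset_def)
  have eq: "M n 0 F1 = M n 0 F2"
  proof -
    have "{e \<in> F1. fst e \<noteq> 0} = {e \<in> F2. fst e \<noteq> 0}" unfolding F1_def F2_def by auto
    then show ?thesis using IC f1 f2 v0 unfolding incentive_compatible_def by blast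
  qed
  define m where "m = M n 0 F1"
  have sm1: "(\<forall>x \<in> vset n. 0 \<le> M n x F1 \<and> M n x F1 \<le> 1) \<and> (\<Sum>x \<in> vset n. M n x F1) \<le> 1"
    using SM f1 unfolding selection_mechanism_def by blast
  have sm2: "(\<forall>x \<in> vset n. 0 \<le> M n x F2 \<and> M n x F2 \<le> 1) \<and> (\<Sum>x \<in> vset n. M n x F2) \<le> 1"
    using SM f2 unfolding selection_mechanism_def by blast
  have fin: "finite (vset n)" by (simp add: vset_def)
  have S1: "(\<Sum>x \<in> vset n. M n x F1 * real (progeny n x F1)) \<le> 1 + m"
  proof -
    have "(\<Sum>x \<in> vset n. M n x F1 * real (progeny n x F1))
        = (\<Sum>x \<in> vset n. M n x F1 + (if x = 0 then M n x F1 else 0))"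
      by (rule sum.cong) (auto simp: prog1 n)
    also have "\<dots> = (\<Sum>x \<in> vset n. M n x F1) + m"
      by (simp add: sum.distrib fin v0 m_def)
    finally show ?thesis using sm1 by linarith
  qed
  have S1p: "0 \<le> (\<Sum>x \<in> vset n. M n x F1 * real (progeny n x F1))"
    using sm1 by (intro sum_nonneg) auto
  have mp1: "2 \<le> real (max_progeny n F1)"
    using maxp_ge[OF v0, of F1] prog1[OF n v0] by simp
  have Q1: "quality M n F1 \<le> (1 + m) / 2"
  proof -
    have "quality M n F1 \<le> (\<Sum>x \<in> vset n. M n x F1 * real (progeny n x F1)) / 2"
      unfolding quality_def using S1p mp1 by (intro divide_left_mono) auto
    then show ?thesis using S1 by (simp add: divide_right_mono)
  qed
  have S2: "(\<Sum>x \<in> vset n. M n x F2 * real (progeny n x F2)) \<le> 3 - m"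
  proof -
    have "(\<Sum>x \<in> vset n. M n x F2 * real (progeny n x F2))
        \<le> (\<Sum>x \<in> vset n. 3 * M n x F2 - (if x = 0 then M n x F2 else 0))"
    proof (rule sum_mono)
      fix x assume x: "x \<in> vset n"
      show "M n x F2 * real (progeny n x F2) \<le> 3 * M n x F2 - (if x = 0 then M n x F2 else 0)"
      proof (cases "x = 0")
        case True then show ?thesis using prog2a[OF n] by simp
      next
        case False
        have "real (progeny n x F2) \<le> 3" using prog2[OF n x] by simp
        then have "M n x F2 * real (progeny n x F2) \<le> M n x F2 * 3"
          using sm2 x by (intro mult_left_mono) auto
        then show ?thesis using False by simp
      qed
    qed
    also have "\<dots> = 3 * (\<Sum>x \<in> vset n. M n x F2) - M n 0 F2"
      by (simp add: sum_subtractf sum_distrib_left fin v0)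
    finally show ?thesis using sm2 eq m_def by linarith
  qed
  have S2p: "0 \<le> (\<Sum>x \<in> vset n. M n x F2 * real (progeny n x F2))"
    using sm2 by (intro sum_nonneg) auto
  have mp2: "3 \<le> real (max_progeny n F2)"
    using maxp_ge[OF v2, of F2] prog2c[OF n] by simp
  have Q2: "quality M n F2 \<le> (3 - m) / 3"
  proof -
    have "quality M n F2 \<le> (\<Sum>x \<in> vset n. M n x F2 * real (progeny n x F2)) / 3"
      unfolding quality_def using S2p mp2 by (intro divide_left_mono) auto
    then show ?thesis using S2 by (simp add: divide_right_mono)
  qed
  have mq1: "min_quality M n \<le> quality M n F1"
    unfolding min_quality_def using f1 finite_forests by (intro Min_le) auto
  have mq2: "min_quality M n \<le> quality M n F2"
    unfolding min_quality_def using f2 finite_forests by (intro Min_le) auto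
  show ?thesis
  proof (cases "m \<le> 3/5")
    case True then have "(1 + m) / 2 \<le> 4/5" by simp
    then show ?thesis using mq1 Q1 by linarith
  next
    case False then have "(3 - m) / 3 \<le> 4/5" by simp
    then show ?thesis using mq2 Q2 by linarith
  qed
qed

theorem proposition1:
  fixes M :: "nat \<Rightarrow> nat \<Rightarrow> (nat \<times> nat) set \<Rightarrow> real" and L :: real
  assumes "selection_mechanism M"
    and "incentive_compatible M"
    and "(\<lambda>n. min_quality M n) \<longlonglongrightarrow> L"
  shows "L \<le> 4 / 5"
proof (rule LIMSEQ_le_const2[OF assms(3)])
  show "\<exists>N. \<forall>n\<ge>N. min_quality M n \<le> 4 / 5"
    using key[OF assms(1,2)] by blast
qed

end
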